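(* Let $C\in\mathbb D$ with basis $c_i=\delta_{\lambda_i}\circ(\partial_z+\gamma_i)$, $i=1,\dots,n$. Then the $N=rn$ functions $c_i(\hat f_j)$, $1\le i\le n$, $1\le j\le r$, are linearly independent.
   Context: Fix an integer $r>1$ and constants $a_1,\dots,a_{r-2}\in\mathbb C$, and let $L_0=\partial^r-a_{r-2}\partial^{r-2}-\cdots-a_1\partial-x$, where $\partial=d/dx$. Fix a basis $f_1,\dots,f_r$ of $\ker L_0$. For a function $f$ of one variable write $\hat f(x,z)=f(x+z)$. $\mathcal S$ denotes the space of finitely supported distributions in the $z$-plane: finite linear combinations of $\delta_\lambda\circ\partial_z^j$ ($\lambda\in\mathbb C$, $j\ge0$), where $\delta_\lambda$ evaluates its argument at $z=\lambda$; applied to a function $\psi(x,z)$ such a distribution acts in the $z$ variable and yields a function of $x$. $\mathbb D$ is the set of finite-dimensional subspaces $C\subset\mathcal S$ having a basis $c_i=\delta_{\lambda_i}\circ(\partial_z+\gamma_i)$, $i=1,\dots,n$ ($n\ge1$), with $\lambda_1,\dots,\lambda_n$ pairwise distinct and $\gamma_i\in\mathbb C$. *)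

theory Defs
  imports "HOL-Analysis.Analysis"
begin

definition L0 :: "nat \<Rightarrow> (nat \<Rightarrow> complex) \<Rightarrow> (complex \<Rightarrow> complex) \<Rightarrow> complex \<Rightarrow> complex" where
  "L0 r a f x = (deriv ^^ r) f x - (\<Sum>k = 1..r - 2. a k * (deriv ^^ k) f x) - x * f x"

definition kerL0 :: "nat \<Rightarrow> (nat \<Rightarrow> complex) \<Rightarrow> (complex \<Rightarrow> complex) set" where
  "kerL0 r a = {f. f holomorphic_on UNIV \<and> (\<forall>x. L0 r a f x = 0)}"

definition lin_indep_fam :: "nat \<Rightarrow> (nat \<Rightarrow> 'a \<Rightarrow> complex) \<Rightarrow> bool" where
  "lin_indep_fam m g \<longleftrightarrow> (\<forall>c. (\<forall>x. (\<Sum>k<m. c k * g k x) = 0) \<longrightarrow> (\<forall>k<m. c k = 0))"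

definition is_basis_kerL0 :: "nat \<Rightarrow> (nat \<Rightarrow> complex) \<Rightarrow> (nat \<Rightarrow> complex \<Rightarrow> complex) \<Rightarrow> bool" where
  "is_basis_kerL0 r a f \<longleftrightarrow>
     (\<forall>j<r. f j \<in> kerL0 r a) \<and> lin_indep_fam r f \<and>
     (\<forall>g\<in>kerL0 r a. \<exists>c. \<forall>x. g x = (\<Sum>j<r. c j * f j x))"

definition hat :: "(complex \<Rightarrow> complex) \<Rightarrow> complex \<Rightarrow> complex \<Rightarrow> complex" where
  "hat f x z = f (x + z)"

text \<open>The distribution delta_lam o (d_z + gam), acting in z on psi(x,z), giving a function of x.\<close>
definition delta_op :: "complex \<Rightarrow> complex \<Rightarrow> (complex \<Rightarrow> complex \<Rightarrow> complex) \<Rightarrow> complex \<Rightarrow> complex" where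
  "delta_op lam gam psi x = deriv (\<lambda>z. psi x z) lam + gam * psi x lam"

end

theory Submission
  imports Defs "HOL-Complex_Analysis.Complex_Analysis"
begin

lemma hd_shift: "(deriv ^^ k) (\<lambda>y. g (y + c)) x = (deriv ^^ k) g (x + c)"
proof -
  have "(deriv ^^ k) (\<lambda>y. g (y + c)) x = (deriv ^^ k) ((\<lambda>y. g (y + c)) \<circ> (\<lambda>y. x + y)) 0"
    by (rule higher_deriv_shift_0)
  also have "(\<lambda>y. g (y + c)) \<circ> (\<lambda>y. x + y) = g \<circ> (\<lambda>y. (x + c) + y)"
    by (auto simp: o_def add_ac)
  also have "(deriv ^^ k) \<dots> 0 = (deriv ^^ k) g (x + c)"
    by (rule higher_deriv_shift_0[symmetric])
  finally show ?thesis .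
qed

lemma L0_lin:
  assumes "f holomorphic_on UNIV" "g holomorphic_on UNIV"
  shows "L0 r a (\<lambda>x. c * f x + d * g x) x = c * L0 r a f x + d * L0 r a g x"
proof -
  have h: "(deriv ^^ k) (\<lambda>x. c * f x + d * g x) x = c * (deriv ^^ k) f x + d * (deriv ^^ k) g x" for k
    using assms by (subst higher_deriv_add[of _ UNIV]) (auto intro!: holomorphic_intros simp: higher_deriv_cmult[of _ UNIV])
  show ?thesis unfolding L0_def h
    by (simp add: algebra_simps sum.distrib sum_distrib_left)
qed

lemma L0_cmult:
  assumes "f holomorphic_on UNIV"
  shows "L0 r a (\<lambda>x. c * f x) x = c * L0 r a f x"
  using L0_lin[OF assms assms, of r a c 0 x] by simp

lemma L0_zero: "L0 r a (\<lambda>x. 0) x = 0"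
  using L0_cmult[of "\<lambda>x. 0" r a 0 x] by simp

lemma L0_hol: "f holomorphic_on UNIV \<Longrightarrow> L0 r a f holomorphic_on UNIV"
proof -
  assume "f holomorphic_on UNIV"
  moreover have "L0 r a f = (\<lambda>x. (deriv ^^ r) f x - (\<Sum>k = 1..r - 2. a k * (deriv ^^ k) f x) - x * f x)"
    by (rule ext) (simp add: L0_def)
  ultimately show ?thesis by (auto intro!: holomorphic_intros)
qed

lemma L0_sum:
  assumes "finite A" "\<forall>j\<in>A. f j holomorphic_on UNIV"
  shows "L0 r a (\<lambda>x. \<Sum>j\<in>A. c j * f j x) x = (\<Sum>j\<in>A. c j * L0 r a (f j) x)"
  using assms
proof (induction A rule: finite_induct)
  case empty then show ?case by (simp add: L0_zero)
next
  case (insert j A)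
  have "L0 r a (\<lambda>x. \<Sum>j\<in>insert j A. c j * f j x) x = L0 r a (\<lambda>x. c j * f j x + 1 * (\<Sum>j\<in>A. c j * f j x)) x"
    using insert by simp
  also have "\<dots> = c j * L0 r a (f j) x + 1 * L0 r a (\<lambda>x. \<Sum>j\<in>A. c j * f j x) x"
    using insert by (intro L0_lin) (auto intro!: holomorphic_intros)
  finally show ?case using insert by simp
qed

lemma L0_shift: "L0 r a (\<lambda>y. g (y + c)) x = L0 r a g (x + c) + c * g (x + c)"
  unfolding L0_def hd_shift by (simp add: algebra_simps)

lemma L0_deriv:
  assumes f: "f holomorphic_on UNIV"
  shows "L0 r a (deriv f) x = deriv (L0 r a f) x + f x"
proof -
  have hd: "((deriv ^^ k) f has_field_derivative (deriv ^^ Suc k) f x) (at x)" for k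
    using holomorphic_derivI[OF holomorphic_higher_deriv[OF f, of k] open_UNIV, of x UNIV] by simp
  have e: "L0 r a f = (\<lambda>x. (deriv ^^ r) f x - (\<Sum>k = 1..r - 2. a k * (deriv ^^ k) f x) - x * f x)"
    by (rule ext) (simp add: L0_def)
  have fd: "(f has_field_derivative deriv f x) (at x)"
    using hd[of 0] by simp
  have s: "((\<lambda>x. \<Sum>k = 1..r - 2. a k * (deriv ^^ k) f x) has_field_derivative (\<Sum>k = 1..r - 2. a k * (deriv ^^ Suc k) f x)) (at x)"
    by (intro DERIV_sum DERIV_cmult hd)
  have m: "((\<lambda>x. x * f x) has_field_derivative (f x + x * deriv f x)) (at x)"
    using DERIV_mult[OF DERIV_ident fd] by (simp add: mult.commute)
  have "(L0 r a f has_field_derivative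
      (deriv ^^ Suc r) f x - (\<Sum>k = 1..r - 2. a k * (deriv ^^ Suc k) f x) - (f x + x * deriv f x)) (at x)"
    unfolding e by (intro DERIV_diff hd s m)
  then have "deriv (L0 r a f) x = (deriv ^^ Suc r) f x - (\<Sum>k = 1..r - 2. a k * (deriv ^^ Suc k) f x) - (f x + x * deriv f x)"
    by (rule DERIV_imp_deriv)
  moreover have "(deriv ^^ k) (deriv f) = (deriv ^^ Suc k) f" for k
    by (simp add: funpow_Suc_right del: funpow.simps)
  ultimately show ?thesis unfolding L0_def by simp
qed

definition SS :: "nat \<Rightarrow> (nat \<Rightarrow> complex) \<Rightarrow> complex \<Rightarrow> (complex \<Rightarrow> complex) \<Rightarrow> complex \<Rightarrow> complex" where
  "SS r a b h = (\<lambda>x. L0 r a h x - b * h x)"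

lemma SS_hol: "h holomorphic_on UNIV \<Longrightarrow> SS r a b h holomorphic_on UNIV"
  using L0_hol[of h r a] unfolding SS_def by (intro holomorphic_intros) auto

lemma SS_lin:
  assumes "f holomorphic_on UNIV" "g holomorphic_on UNIV"
  shows "SS r a b (\<lambda>x. c * f x + d * g x) x = c * SS r a b f x + d * SS r a b g x"
  unfolding SS_def using L0_lin[OF assms] by (simp add: algebra_simps)

lemma SS_cmult:
  assumes "f holomorphic_on UNIV"
  shows "SS r a b (\<lambda>x. c * f x) x = c * SS r a b f x"
  using SS_lin[OF assms assms, of r a b c 0 x] by simp

lemma SS_zero: "SS r a b (\<lambda>x. 0) x = 0"
  using SS_cmult[of "\<lambda>x. 0" r a b 0 x] by simp

lemma SS_sum:
  assumes "finite A" "\<forall>j\<in>A. f j holomorphic_on UNIV"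
  shows "SS r a b (\<lambda>x. \<Sum>j\<in>A. f j x) x = (\<Sum>j\<in>A. SS r a b (f j) x)"
  using assms
proof (induction A rule: finite_induct)
  case empty then show ?case by (simp add: SS_zero)
next
  case (insert j A)
  have "SS r a b (\<lambda>x. \<Sum>j\<in>insert j A. f j x) x = SS r a b (\<lambda>x. 1 * f j x + 1 * (\<Sum>j\<in>A. f j x)) x"
    using insert by simp
  also have "\<dots> = 1 * SS r a b (f j) x + 1 * SS r a b (\<lambda>x. \<Sum>j\<in>A. f j x) x"
    using insert by (intro SS_lin) (auto intro!: holomorphic_intros)
  finally show ?case using insert by simp
qed

lemma SS_comm:
  assumes "h holomorphic_on UNIV"
  shows "SS r a c (SS r a b h) = SS r a b (SS r a c h)"
proof
  fix x
  have hh: "L0 r a h holomorphic_on UNIV" by (rule L0_hol[OF assms])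
  have L: "L0 r a (SS r a b h) x = L0 r a (L0 r a h) x - b * L0 r a h x" for b
    using L0_lin[OF hh assms, of r a 1 "-b" x] unfolding SS_def by simp
  show "SS r a c (SS r a b h) x = SS r a b (SS r a c h) x"
    unfolding SS_def[of r a c "SS r a b h"] SS_def[of r a b "SS r a c h"] L
    by (simp add: SS_def algebra_simps)
qed

lemma two_eig:
  assumes H: "H holomorphic_on UNIV" and A: "\<forall>x. SS r a p (SS r a p H) x = 0"
    and B: "\<forall>x. SS r a q (SS r a q H) x = 0" and pq: "p \<noteq> q"
  shows "H x = 0"
proof -
  define u where "u = SS r a p H"
  have u: "u holomorphic_on UNIV" unfolding u_def by (rule SS_hol[OF H])
  have su: "SS r a p u y = 0" for y using A u_def by simp
  have sb: "SS r a q H = (\<lambda>y. 1 * u y + (p - q) * H y)"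
    unfolding u_def SS_def by (auto simp: algebra_simps)
  have sbu: "SS r a q u y = (p - q) * u y" for y
    using su[of y] unfolding SS_def by (simp add: algebra_simps)
  have e0: "SS r a q (\<lambda>y. 1 * u y + (p - q) * H y) y = 1 * SS r a q u y + (p - q) * SS r a q H y" for y
    by (rule SS_lin[OF u H])
  have e: "SS r a q (SS r a q H) y = 1 * SS r a q u y + (p - q) * SS r a q H y" for y
    using e0[of y] by (simp only: sb[symmetric])
  have z: "0 = (p - q) * u y + (p - q) * (u y + (p - q) * H y)" for y
    using e[of y] B sbu[of y] sb by simp
  have z2: "(p - q) * (2 * u y + (p - q) * H y) = 0" for y
    using z[of y] by (simp add: algebra_simps)
  have z3: "2 * u y + (p - q) * H y = 0" for y
    using z2[of y] pq by simp
  have Hu: "H y = (-2 / (p - q)) * u y" for y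
    using z3[of y] pq by (simp add: field_simps)
  have "H = (\<lambda>y. (-2 / (p - q)) * u y)" using Hu by auto
  then have "u y = SS r a p (\<lambda>y. (-2 / (p - q)) * u y) y" for y unfolding u_def by simp
  also have "\<dots> y = 0" for y using SS_cmult[OF u, of r a p "-2 / (p - q)" y] su[of y] by (simp only:) simp
  finally show ?thesis using Hu by simp
qed

lemma gen_eig:
  fixes n :: nat and H :: "nat \<Rightarrow> complex \<Rightarrow> complex" and lam :: "nat \<Rightarrow> complex"
  shows "(\<forall>i<n. H i holomorphic_on UNIV \<and> (\<forall>x. SS r a (lam i) (SS r a (lam i) (H i)) x = 0)) \<Longrightarrow>
   inj_on lam {..<n} \<Longrightarrow> (\<forall>x. (\<Sum>i<n. H i x) = 0) \<Longrightarrow> \<forall>i<n. \<forall>x. H i x = 0"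
proof (induction n arbitrary: H)
  case 0 then show ?case by simp
next
  case (Suc n)
  define b where "b = lam n"
  define K where "K i = SS r a b (SS r a b (H i))" for i
  have Hh: "H i holomorphic_on UNIV" if "i < Suc n" for i using Suc.prems(1) that by auto
  have Kh: "K i holomorphic_on UNIV" if "i < Suc n" for i unfolding K_def by (intro SS_hol Hh that)
  have S1: "SS r a b (\<lambda>x. \<Sum>i<Suc n. H i x) x = (\<Sum>i<Suc n. SS r a b (H i) x)" for x
    by (rule SS_sum) (auto intro: Hh)
  have S1': "SS r a b (\<lambda>x. \<Sum>i<Suc n. H i x) = (\<lambda>x. \<Sum>i<Suc n. SS r a b (H i) x)"
    using S1 by auto
  have S2: "SS r a b (\<lambda>x. \<Sum>i<Suc n. SS r a b (H i) x) x = (\<Sum>i<Suc n. K i x)" for x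
    unfolding K_def by (rule SS_sum) (auto intro: Hh SS_hol)
  have zf: "(\<lambda>x. \<Sum>i<Suc n. H i x) = (\<lambda>x. 0)" using Suc.prems(3) by auto
  have z0: "SS r a b (\<lambda>x. 0) = (\<lambda>x. 0)" by (rule ext) (rule SS_zero)
  have "(\<Sum>i<Suc n. K i x) = 0" for x
  proof -
    have "(\<Sum>i<Suc n. K i x) = SS r a b (SS r a b (\<lambda>x. \<Sum>i<Suc n. H i x)) x"
      by (simp only: S1' S2)
    also have "\<dots> = 0" unfolding zf z0 ..
    finally show ?thesis .
  qed
  moreover have "K n x = 0" for x
    using Suc.prems(1) unfolding K_def b_def by auto
  ultimately have sK: "\<forall>x. (\<Sum>i<n. K i x) = 0" by simp
  have Kp: "\<forall>i<n. K i holomorphic_on UNIV \<and> (\<forall>x. SS r a (lam i) (SS r a (lam i) (K i)) x = 0)"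
  proof (intro allI impI conjI)
    fix i x assume i: "i < n"
    show "K i holomorphic_on UNIV" using i by (intro Kh) auto
    have h1: "SS r a b (H i) holomorphic_on UNIV" using i by (intro SS_hol Hh) auto
    have h2: "SS r a (lam i) (H i) holomorphic_on UNIV" using i by (intro SS_hol Hh) auto
    have h4: "SS r a b (SS r a (lam i) (H i)) holomorphic_on UNIV" by (rule SS_hol[OF h2])
    have c1: "SS r a (lam i) (SS r a b (H i)) = SS r a b (SS r a (lam i) (H i))"
      by (rule SS_comm) (use Hh i in auto)
    have "SS r a (lam i) (SS r a (lam i) (K i)) = SS r a (lam i) (SS r a b (SS r a (lam i) (SS r a b (H i))))"
      unfolding K_def SS_comm[OF h1, of r a "lam i" b] ..
    also have "\<dots> = SS r a (lam i) (SS r a b (SS r a b (SS r a (lam i) (H i))))"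
      unfolding c1 ..
    also have "\<dots> = SS r a b (SS r a (lam i) (SS r a b (SS r a (lam i) (H i))))"
      by (rule SS_comm[OF h4])
    also have "\<dots> = SS r a b (SS r a b (SS r a (lam i) (SS r a (lam i) (H i))))"
      unfolding SS_comm[OF h2, of r a "lam i" b] ..
    also have "SS r a (lam i) (SS r a (lam i) (H i)) = (\<lambda>x. 0)"
      using Suc.prems(1) i by auto
    finally show "SS r a (lam i) (SS r a (lam i) (K i)) x = 0" by (simp add: SS_zero)
  qed
  have inj: "inj_on lam {..<n}" using Suc.prems(2) by (auto simp: inj_on_def)
  have K0: "\<forall>i<n. \<forall>x. K i x = 0" by (rule Suc.IH[OF Kp inj sK])
  have Hlt: "\<forall>i<n. \<forall>x. H i x = 0"
  proof (intro allI impI)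
    fix i x assume i: "i < n"
    have ne: "lam i \<noteq> b" unfolding b_def using Suc.prems(2) i by (auto simp: inj_on_def)
    show "H i x = 0"
      by (rule two_eig[OF Hh, of i r a "lam i" b]) (use i Suc.prems(1) K0 ne in \<open>auto simp: K_def\<close>)
  qed
  have "H n x = 0" for x using Suc.prems(3) Hlt by simp
  then show ?case using Hlt less_Suc_eq by auto
qed

theorem mainTheorem4:
  fixes r n :: nat and a :: "nat \<Rightarrow> complex" and f :: "nat \<Rightarrow> complex \<Rightarrow> complex"
    and lam gam :: "nat \<Rightarrow> complex"
  assumes "r > 1"
    and "is_basis_kerL0 r a f"
    and "n \<ge> 1"
    and "inj_on lam {..<n}"
  shows "\<forall>\<mu> :: nat \<Rightarrow> nat \<Rightarrow> complex.
           (\<forall>x. (\<Sum>i<n. \<Sum>j<r. \<mu> i j * delta_op (lam i) (gam i) (hat (f j)) x) = 0)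
           \<longrightarrow> (\<forall>i<n. \<forall>j<r. \<mu> i j = 0)"
proof (rule allI, rule impI)
  fix \<mu> :: "nat \<Rightarrow> nat \<Rightarrow> complex"
  assume sum0: "\<forall>x. (\<Sum>i<n. \<Sum>j<r. \<mu> i j * delta_op (lam i) (gam i) (hat (f j)) x) = 0"
  have fh: "f j holomorphic_on UNIV" if "j < r" for j
    using assms(2) that by (auto simp: is_basis_kerL0_def kerL0_def)
  have fk: "L0 r a (f j) x = 0" if "j < r" for j x
    using assms(2) that by (auto simp: is_basis_kerL0_def kerL0_def)
  have ind: "lin_indep_fam r f" using assms(2) by (simp add: is_basis_kerL0_def)
  define g where "g i = (\<lambda>x. \<Sum>j<r. \<mu> i j * f j x)" for i
  define G where "G i = (\<lambda>x. g i (x + lam i))" for i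
  define H where "H i = (\<lambda>x. deriv (G i) x + gam i * G i x)" for i
  have gh: "g i holomorphic_on UNIV" for i
    unfolding g_def by (intro holomorphic_intros fh) auto
  have gk: "L0 r a (g i) x = 0" for i x
    unfolding g_def by (subst L0_sum) (auto intro: fh simp: fk)
  have Gh: "G i holomorphic_on UNIV" for i
  proof -
    have "G i = g i \<circ> (\<lambda>x. x + lam i)" unfolding G_def by auto
    moreover have "(\<lambda>x. x + lam i) holomorphic_on UNIV" by (intro holomorphic_intros)
    ultimately show ?thesis using holomorphic_on_compose[of "\<lambda>x. x + lam i" UNIV "g i"] gh
      by (metis holomorphic_on_subset subset_UNIV)
  qed
  have GL: "L0 r a (G i) x = lam i * G i x" for i x
    unfolding G_def L0_shift gk by simp
  have GL': "L0 r a (G i) = (\<lambda>x. lam i * G i x)" for i using GL by auto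
  have dGh: "deriv (G i) holomorphic_on UNIV" for i by (intro holomorphic_deriv Gh) auto
  have Hh: "H i holomorphic_on UNIV" for i
    unfolding H_def by (intro holomorphic_intros dGh Gh)
  have SH: "SS r a (lam i) (H i) x = G i x" for i x
  proof -
    have "L0 r a (H i) x = 1 * L0 r a (deriv (G i)) x + gam i * L0 r a (G i) x"
      using L0_lin[OF dGh[of i] Gh[of i], of r a 1 "gam i" x] unfolding H_def by simp
    also have "L0 r a (deriv (G i)) x = deriv (L0 r a (G i)) x + G i x"
      by (rule L0_deriv[OF Gh])
    also have "deriv (L0 r a (G i)) x = lam i * deriv (G i) x"
      unfolding GL' by (intro deriv_cmult holomorphic_on_imp_differentiable_at[OF Gh]) auto
    finally show ?thesis unfolding SS_def H_def GL by (simp add: algebra_simps)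
  qed
  have SSH: "\<forall>x. SS r a (lam i) (SS r a (lam i) (H i)) x = 0" for i
  proof -
    have "SS r a (lam i) (H i) = G i" using SH by auto
    then show ?thesis by (simp add: SS_def GL)
  qed
  have dg: "deriv (g i) y = (\<Sum>j<r. \<mu> i j * deriv (f j) y)" for i y
  proof -
    have "(g i has_field_derivative (\<Sum>j<r. \<mu> i j * deriv (f j) y)) (at y)"
      unfolding g_def
      by (intro DERIV_sum DERIV_cmult holomorphic_derivI[OF fh]) auto
    then show ?thesis by (rule DERIV_imp_deriv)
  qed
  have dG: "deriv (G i) x = deriv (g i) (x + lam i)" for i x
    using hd_shift[of 1 "g i" "lam i" x] unfolding G_def by simp
  have dop: "delta_op (lam i) (gam i) (hat (f j)) x = deriv (f j) (lam i + x) + gam i * f j (x + lam i)" for i j x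
  proof -
    have e: "hat (f j) x = (\<lambda>z. f j (z + x))" by (auto simp: hat_def add.commute)
    have "deriv (hat (f j) x) (lam i) = deriv (f j) (lam i + x)"
      unfolding e using hd_shift[of 1 "f j" x "lam i"] by simp
    then show ?thesis unfolding delta_op_def by (simp add: hat_def add.commute)
  qed
  have sumH: "\<forall>x. (\<Sum>i<n. H i x) = 0"
  proof
    fix x
    have "H i x = (\<Sum>j<r. \<mu> i j * delta_op (lam i) (gam i) (hat (f j)) x)" for i
      unfolding H_def dG dg dop
      by (simp add: G_def g_def algebra_simps sum.distrib sum_distrib_left)
    then show "(\<Sum>i<n. H i x) = 0" using sum0 by simp
  qed
  have H0: "\<forall>i<n. \<forall>x. H i x = 0"
    by (rule gen_eig) (use Hh SSH assms(4) sumH in auto)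
  show "\<forall>i<n. \<forall>j<r. \<mu> i j = 0"
  proof (intro allI impI)
    fix i j assume i: "i < n" and j: "j < r"
    have "H i = (\<lambda>x. 0)" using H0 i by auto
    then have G0: "G i x = 0" for x using SH[of i x] by (simp add: SS_zero)
    have "\<forall>y. (\<Sum>k<r. \<mu> i k * f k y) = 0"
    proof
      fix y show "(\<Sum>k<r. \<mu> i k * f k y) = 0" using G0[of "y - lam i"] by (simp add: G_def g_def)
    qed
    then show "\<mu> i j = 0" using ind j unfolding lin_indep_fam_def by blast
  qed
qed

end
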